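(* Let $c\in\mathbb{R}$ with $c>0$ and $h:\mathbb{N}\to(0,\infty]$ with $0<h(n)<\infty$ for all $n\in\mathbb{N}$. Consider the recurrence $$T(1)=c,\qquad T(n)=T(n-1)+h(n)\ \text{ for } n\ge2.$$ Then it has a unique solution $f_T\in\mathcal{RT}_c$. Moreover, if there exists $g\in\mathcal{RT}_c$ such that $\Gamma_T$ is an improver with respect to $g$, then $f_T\in\mathcal{O}(g)$.
   Context: $\mathbb{N}$ is the set of positive integers, $\omega$ the nonnegative integers. $\mathcal{RT}$ is the set of functions $\mathbb{N}\to(0,\infty]$ and $\mathcal{RT}_c=\{f\in\mathcal{RT}: f(1)=c\}$. $\Gamma_T:\mathcal{RT}_c\to\mathcal{RT}_c$ is defined by $\Gamma_T(f)(1)=c$ and $\Gamma_T(f)(n)=f(n-1)+h(n)$ for $n\ge2$. A functional $\Phi:C\to C$ ($C\subseteq\mathcal{RT}$) is an improver with respect to $f\in C$ if $\Phi^{n+1}(f)\le\Phi^n(f)$ pointwise for all $n\in\omega$ (with $\Phi^0(f)=f$). $f\in\mathcal{O}(g)$ means there exist $n_0\in\mathbb{N}$ and $C\ge0$ with $f(n)\le Cg(n)$ for all $n\ge n_0$. *)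

theory Defs
  imports "HOL-Library.Extended_Real"
begin

text \<open>Functions N -> (0,infinity] are modelled as nat => ereal; only arguments n >= 1 matter
  (the value at 0 is irrelevant and ignored everywhere).\<close>

definition RT :: "(nat \<Rightarrow> ereal) set" where
  "RT = {f. \<forall>n\<ge>1. 0 < f n}"

definition RT_c :: "real \<Rightarrow> (nat \<Rightarrow> ereal) set" where
  "RT_c c = {f \<in> RT. f 1 = ereal c}"

definition GammaT :: "real \<Rightarrow> (nat \<Rightarrow> real) \<Rightarrow> (nat \<Rightarrow> ereal) \<Rightarrow> (nat \<Rightarrow> ereal)" where
  "GammaT c h f = (\<lambda>n. if n \<le> 1 then ereal c else f (n - 1) + ereal (h n))"

definition improver :: "((nat \<Rightarrow> ereal) \<Rightarrow> (nat \<Rightarrow> ereal)) \<Rightarrow> (nat \<Rightarrow> ereal) \<Rightarrow> bool" where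
  "improver Phi f \<longleftrightarrow> (\<forall>k n. n \<ge> 1 \<longrightarrow> (Phi ^^ Suc k) f n \<le> (Phi ^^ k) f n)"

definition bigO :: "(nat \<Rightarrow> ereal) \<Rightarrow> (nat \<Rightarrow> ereal) \<Rightarrow> bool" where
  "bigO f g \<longleftrightarrow> (\<exists>n0\<ge>1. \<exists>C::real\<ge>0. \<forall>n\<ge>n0. f n \<le> ereal C * g n)"

definition solves_rec :: "real \<Rightarrow> (nat \<Rightarrow> real) \<Rightarrow> (nat \<Rightarrow> ereal) \<Rightarrow> bool" where
  "solves_rec c h f \<longleftrightarrow> f \<in> RT_c c \<and> f 1 = ereal c \<and>
     (\<forall>n\<ge>2. f n = f (n - 1) + ereal (h n))"

end

theory Submission
  imports Defs
begin

lemma sum_step: "(n::nat) \<ge> 2 \<Longrightarrow> (\<Sum>i=2..n. h i) = (\<Sum>i=2..n-1. h i) + (h n :: real)"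
proof -
  assume "n \<ge> 2"
  then obtain m where "n = Suc m" "m \<ge> 1" by (cases n) auto
  thus ?thesis by (simp add: add.commute)
qed

lemma iter_exact:
  assumes g1: "g 1 = ereal c"
  shows "\<forall>n. 1 \<le> n \<longrightarrow> n \<le> k+1 \<longrightarrow>
     (GammaT c h ^^ k) g n = ereal (c + (\<Sum>i=2..n. h i))"
proof (induction k)
  case 0
  then show ?case using g1 by auto
next
  case (Suc k)
  show ?case
  proof (intro allI impI)
    fix n :: nat assume n: "1 \<le> n" "n \<le> Suc k + 1"
    show "(GammaT c h ^^ Suc k) g n = ereal (c + (\<Sum>i=2..n. h i))"
    proof (cases "n \<le> 1")
      case True
      then have "n = 1" using n by simp
      then show ?thesis by (simp add: GammaT_def)
    next
      case False
      then have "(GammaT c h ^^ Suc k) g n = (GammaT c h ^^ k) g (n-1) + ereal (h n)"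
        by (simp add: GammaT_def)
      also have "\<dots> = ereal (c + (\<Sum>i=2..n-1. h i)) + ereal (h n)"
        using Suc.IH False n by auto
      also have "\<dots> = ereal (c + (\<Sum>i=2..n. h i))"
        using sum_step[of n h] False by simp
      finally show ?thesis .
    qed
  qed
qed

lemma iter_le:
  assumes "improver Phi g" "n \<ge> 1"
  shows "(Phi ^^ k) g n \<le> g n"
proof (induction k)
  case 0 then show ?case by simp
next
  case (Suc k)
  have "(Phi ^^ Suc k) g n \<le> (Phi ^^ k) g n" using assms unfolding improver_def by blast
  then show ?case using Suc order_trans by blast
qed

theorem corollary12:
  fixes c :: real and h :: "nat \<Rightarrow> real"
  assumes "c > 0"
    and "\<forall>n\<ge>1. 0 < h n"
  shows "\<exists>fT. solves_rec c h fT
           \<and> (\<forall>f. solves_rec c h f \<longrightarrow> (\<forall>n\<ge>1. f n = fT n))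
           \<and> (\<forall>g \<in> RT_c c. improver (GammaT c h) g \<longrightarrow> bigO fT g)"
proof -
  define fT where "fT = (\<lambda>n. ereal (c + (\<Sum>i=2..n. h i)))"
  have pos: "\<And>n. 0 < fT n"
  proof -
    fix n
    have "(\<Sum>i=2..n. h i) \<ge> 0" using assms(2) by (intro sum_nonneg) (auto simp: less_imp_le)
    thus "0 < fT n" using assms(1) by (simp add: fT_def)
  qed
  have sol: "solves_rec c h fT"
    unfolding solves_rec_def RT_c_def RT_def
    using pos sum_step[of _ h] by (auto simp: fT_def)
  have uniq: "\<forall>f. solves_rec c h f \<longrightarrow> (\<forall>n\<ge>1. f n = fT n)"
  proof (intro allI impI)
    fix f n assume f: "solves_rec c h f" and "(n::nat) \<ge> 1"
    {
      from \<open>n \<ge> 1\<close> show "f n = fT n"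
      proof (induction n rule: dec_induct)
        case base then show ?case using f by (simp add: solves_rec_def fT_def)
      next
        case (step m)
        have "f (Suc m) = f m + ereal (h (Suc m))"
          using f step.hyps unfolding solves_rec_def by (metis diff_Suc_1 Suc_le_mono one_add_one plus_1_eq_Suc)
        also have "\<dots> = fT m + ereal (h (Suc m))" using step.IH by simp
        also have "\<dots> = fT (Suc m)"
          using sum_step[of "Suc m" h] step.hyps by (simp add: fT_def)
        finally show ?case .
      qed
    }
  qed
  have big: "\<forall>g \<in> RT_c c. improver (GammaT c h) g \<longrightarrow> bigO fT g"
  proof (intro ballI impI)
    fix g assume g: "g \<in> RT_c c" and imp: "improver (GammaT c h) g"
    have "\<forall>n\<ge>1. fT n \<le> ereal 1 * g n"
    proof (intro allI impI)
      fix n :: nat assume n: "n \<ge> 1"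
      have "(GammaT c h ^^ n) g n = fT n"
        using iter_exact[of g c n h] g n by (simp add: RT_c_def fT_def)
      moreover have "(GammaT c h ^^ n) g n \<le> g n" using iter_le[OF imp n] .
      ultimately show "fT n \<le> ereal 1 * g n" by simp
    qed
    then show "bigO fT g" unfolding bigO_def by (metis order_refl zero_le_one)
  qed
  show ?thesis using sol uniq big by blast
qed

end
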